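(* Let $\mathcal{A}$ be a learning-augmented memory-constrained algorithm for the $2$-server problem on the line and let $\lambda\in(0,1]$. If $\mathcal{A}$ is $(1+\lambda)$-consistent, then it is not $\beta'$-robust for any $\beta'<1+1/\lambda$ (i.e., it is at least $(1+1/\lambda)$-robust).
   Context: The $2$-server problem on the line: servers on $\mathbb{R}$, requests revealed online, each served by moving a server to it; cost = total distance moved; $\mathrm{OPT}$ is the optimal offline cost. A prediction gives for each request an index in $\{1,2\}$ (the predicted server, servers labeled by position); FtP serves each request by the predicted server, and $\eta=\mathrm{FtP}-\mathrm{OPT}$. $\alpha$-consistent: $\mathcal{A}(I)\le\alpha\,\mathrm{OPT}(I)+c$ for every instance and every prediction with $\eta=0$; $\beta$-robust: $\mathcal{A}(I)\le\beta\,\mathrm{OPT}(I)+c$ for every instance and prediction; $c$ depends only on the initial configuration. Memory-constrained: each decision depends only on the current configuration, current request and current prediction; several servers may be moved per request; and for any set of $k$ distinct points and any configuration there exists a finite sequence of requests among these points (a force) after which each point contains exactly one server. *)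

theory Defs
  imports Complex_Main
begin

text \<open>A configuration is a pair of server
positions; configurations handled by the online algorithm are kept sorted
(first component = left server = server 1, second = right server = server 2),
so that servers are labelled by position and the algorithm cannot store
information in the labelling.\<close>

type_synonym conf = "real \<times> real"

definition sorted_conf :: "conf \<Rightarrow> bool" where
  "sorted_conf c \<longleftrightarrow> fst c \<le> snd c"

definition covers :: "conf \<Rightarrow> real \<Rightarrow> bool" where
  "covers c r \<longleftrightarrow> fst c = r \<or> snd c = r"

text \<open>Cost of moving from one configuration to another (servers are
interchangeable, so the cheaper of the two matchings).\<close>
definition cdist :: "conf \<Rightarrow> conf \<Rightarrow> real" where
  "cdist c d = min (\<bar>fst c - fst d\<bar> + \<bar>snd c - snd d\<bar>)
                   (\<bar>fst c - snd d\<bar> + \<bar>snd c - fst d\<bar>)"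

text \<open>A memory-constrained online algorithm: new configuration as a function of
the current configuration, the current request and the current predicted index.\<close>
type_synonym alg = "conf \<Rightarrow> real \<Rightarrow> nat \<Rightarrow> conf"

text \<open>An instance part: list of (request, predicted server index).\<close>
fun alg_cost :: "alg \<Rightarrow> conf \<Rightarrow> (real \<times> nat) list \<Rightarrow> real" where
  "alg_cost A c [] = 0"
| "alg_cost A c ((r, i) # rest) = cdist c (A c r i) + alg_cost A (A c r i) rest"

fun alg_final :: "alg \<Rightarrow> conf \<Rightarrow> (real \<times> nat) list \<Rightarrow> conf" where
  "alg_final A c [] = c"
| "alg_final A c ((r, i) # rest) = alg_final A (A c r i) rest"

text \<open>Follow-the-Prediction: serve each request by the predicted server
(1 = left, 2 = right).\<close>
definition ftp_step :: "conf \<Rightarrow> real \<Rightarrow> nat \<Rightarrow> conf" where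
  "ftp_step c r i = (if i = 1 then (min r (snd c), max r (snd c))
                     else (min (fst c) r, max (fst c) r))"

definition ftp_step_cost :: "conf \<Rightarrow> real \<Rightarrow> nat \<Rightarrow> real" where
  "ftp_step_cost c r i = (if i = 1 then \<bar>fst c - r\<bar> else \<bar>snd c - r\<bar>)"

fun ftp_cost :: "conf \<Rightarrow> (real \<times> nat) list \<Rightarrow> real" where
  "ftp_cost c [] = 0"
| "ftp_cost c ((r, i) # rest) = ftp_step_cost c r i + ftp_cost (ftp_step c r i) rest"

fun sched_cost :: "conf \<Rightarrow> conf list \<Rightarrow> real" where
  "sched_cost c [] = 0"
| "sched_cost c (d # ds) = cdist c d + sched_cost d ds"

definition opt :: "conf \<Rightarrow> real list \<Rightarrow> real" where
  "opt c rs = Inf {sched_cost c cs | cs. length cs = length rs \<and>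
                     (\<forall>j < length rs. covers (cs ! j) (rs ! j))}"

definition valid_preds :: "(real \<times> nat) list \<Rightarrow> bool" where
  "valid_preds I \<longleftrightarrow> (\<forall>x \<in> set I. snd x \<in> {1, 2})"

definition eta :: "conf \<Rightarrow> (real \<times> nat) list \<Rightarrow> real" where
  "eta c I = ftp_cost c I - opt c (map fst I)"

definition consistent :: "alg \<Rightarrow> real \<Rightarrow> bool" where
  "consistent A \<alpha> \<longleftrightarrow> (\<exists>C :: conf \<Rightarrow> real. \<forall>c I. sorted_conf c \<and> valid_preds I \<and> eta c I = 0
      \<longrightarrow> alg_cost A c I \<le> \<alpha> * opt c (map fst I) + C c)"

definition robust :: "alg \<Rightarrow> real \<Rightarrow> bool" where
  "robust A \<beta> \<longleftrightarrow> (\<exists>C :: conf \<Rightarrow> real. \<forall>c I. sorted_conf c \<and> valid_preds I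
      \<longrightarrow> alg_cost A c I \<le> \<beta> * opt c (map fst I) + C c)"

text \<open>Memory-constrained algorithm for k = 2: it always serves the request, keeps
configurations sorted, and admits a force: for any two distinct points and any
configuration there is a finite request sequence among these points after which
each point holds exactly one server (whatever the predictions are).\<close>
definition memory_constrained :: "alg \<Rightarrow> bool" where
  "memory_constrained A \<longleftrightarrow>
     (\<forall>c r i. sorted_conf c \<longrightarrow> sorted_conf (A c r i) \<and> covers (A c r i) r) \<and>
     (\<forall>c p q. sorted_conf c \<and> p \<noteq> q \<longrightarrow>
        (\<exists>rs. set rs \<subseteq> {p, q} \<and>
           (\<forall>ps. length ps = length rs \<and> set ps \<subseteq> {1, 2} \<longrightarrow>
              (let d = alg_final A c (zip rs ps) in d = (p, q) \<or> d = (q, p)))))"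

end

theory Submission
  imports Defs
begin
lemma cdist_nonneg: "0 \<le> cdist c d"
  by (simp add: cdist_def)

lemma cdist_self: "cdist c c = 0"
  by (simp add: cdist_def)

lemma cdist_tri: "cdist c e \<le> cdist c d + cdist d e"
proof -
  obtain c1 c2 d1 d2 e1 e2 where "c = (c1,c2)" "d = (d1,d2)" "e = (e1,e2)" by (cases c, cases d, cases e) auto
  then show ?thesis unfolding cdist_def by (simp add: min_def split: if_splits; smt (verit))
qed

lemma alg_cost_append: "alg_cost A c (xs @ ys) = alg_cost A c xs + alg_cost A (alg_final A c xs) ys"
  by (induction A c xs rule: alg_final.induct) auto

lemma alg_final_append: "alg_final A c (xs @ ys) = alg_final A (alg_final A c xs) ys"
  by (induction A c xs rule: alg_final.induct) auto

lemma alg_cost_ge: "cdist c (alg_final A c xs) \<le> alg_cost A c xs"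
proof (induction xs arbitrary: c)
  case Nil then show ?case by (simp add: cdist_self)
next
  case (Cons p xs)
  obtain r i where P: "p = (r,i)" by (cases p)
  have "cdist c (alg_final A (A c r i) xs) \<le> cdist c (A c r i) + cdist (A c r i) (alg_final A (A c r i) xs)"
    by (rule cdist_tri)
  also have "\<dots> \<le> cdist c (A c r i) + alg_cost A (A c r i) xs" using Cons.IH by simp
  finally show ?case by (simp add: P)
qed

lemma alg_rep:
  assumes "alg_final A c cyc = c"
  shows "alg_final A c (concat (replicate n cyc)) = c \<and> alg_cost A c (concat (replicate n cyc)) = real n * alg_cost A c cyc"
  by (induction n) (auto simp: alg_cost_append alg_final_append assms algebra_simps)

lemma mc_step:
  assumes "memory_constrained A" "sorted_conf c"
  shows "sorted_conf (A c r i) \<and> covers (A c r i) r"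
  using assms unfolding memory_constrained_def by blast

lemma mc_sorted:
  assumes "memory_constrained A" "sorted_conf c"
  shows "sorted_conf (alg_final A c xs)"
  using assms(2)
proof (induction xs arbitrary: c)
  case Nil then show ?case by simp
next
  case (Cons p xs)
  obtain r i where P: "p = (r,i)" by (cases p)
  show ?case using Cons mc_step[OF assms(1) Cons.prems, of r i] by (simp add: P)
qed

lemma mc_force:
  assumes "memory_constrained A" "sorted_conf c" "p < q"
  obtains rs where "set rs \<subseteq> {p,q}"
    "\<And>f. (\<And>r. f r \<in> {1,2}) \<Longrightarrow> alg_final A c (map (\<lambda>r. (r, f r)) rs) = (p,q)"
proof -
  from assms obtain rs where rs: "set rs \<subseteq> {p, q}"
    "\<forall>ps. length ps = length rs \<and> set ps \<subseteq> {1, 2} \<longrightarrow>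
              (let d = alg_final A c (zip rs ps) in d = (p, q) \<or> d = (q, p))"
    unfolding memory_constrained_def by (metis less_irrefl)
  show ?thesis
  proof (rule that[OF rs(1)])
    fix f :: "real \<Rightarrow> nat" assume f: "\<And>r. f r \<in> {1,2}"
    have z: "zip rs (map f rs) = map (\<lambda>r. (r, f r)) rs" by (induction rs) auto
    have "set (map f rs) \<subseteq> {1,2}" using f by auto
    then have "let d = alg_final A c (map (\<lambda>r. (r, f r)) rs) in d = (p, q) \<or> d = (q, p)"
      using rs(2)[rule_format, of "map f rs"] z by simp
    moreover have "sorted_conf (alg_final A c (map (\<lambda>r. (r, f r)) rs))"
      using mc_sorted[OF assms(1,2)] by blast
    ultimately show "alg_final A c (map (\<lambda>r. (r, f r)) rs) = (p,q)"
      using assms(3) by (auto simp: Let_def sorted_conf_def)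
  qed
qed

fun ftp_final :: "conf \<Rightarrow> (real \<times> nat) list \<Rightarrow> conf" where
  "ftp_final c [] = c"
| "ftp_final c ((r, i) # rest) = ftp_final (ftp_step c r i) rest"

lemma ftp_cost_append: "ftp_cost c (xs @ ys) = ftp_cost c xs + ftp_cost (ftp_final c xs) ys"
  by (induction c xs rule: ftp_final.induct) auto

lemma ftp_final_append: "ftp_final c (xs @ ys) = ftp_final (ftp_final c xs) ys"
  by (induction c xs rule: ftp_final.induct) auto

lemma ftp_rep:
  assumes "ftp_final c cyc = c"
  shows "ftp_final c (concat (replicate n cyc)) = c \<and> ftp_cost c (concat (replicate n cyc)) = real n * ftp_cost c cyc"
  by (induction n) (auto simp: ftp_cost_append ftp_final_append assms algebra_simps)

lemma sched_nonneg: "0 \<le> sched_cost c cs"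
  by (induction cs arbitrary: c) (auto intro: add_nonneg_nonneg cdist_nonneg)

lemma sched_append: "sched_cost c (xs @ ys) = sched_cost c xs + sched_cost (last (c # xs)) ys"
  by (induction xs arbitrary: c) auto

lemma sched_ge: "cdist c (last (c # xs)) \<le> sched_cost c xs"
proof (induction xs arbitrary: c)
  case Nil then show ?case by (simp add: cdist_self)
next
  case (Cons d xs)
  have "cdist c (last (d # xs)) \<le> cdist c d + cdist d (last (d # xs))" by (rule cdist_tri)
  then show ?case using Cons.IH[of d] by simp
qed

lemma sched_rep:
  assumes "cs \<noteq> []" "last cs = c"
  shows "sched_cost c (concat (replicate n cs)) = real n * sched_cost c cs"
proof (induction n)
  case 0 then show ?case by simp
next
  case (Suc n)
  have "sched_cost c (concat (replicate (Suc n) cs)) = sched_cost c cs + sched_cost (last (c # cs)) (concat (replicate n cs))"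
    by (simp add: sched_append)
  also have "last (c # cs) = c" using assms by simp
  finally show ?case using Suc.IH by (simp add: algebra_simps)
qed

definition covl :: "conf list \<Rightarrow> real list \<Rightarrow> bool" where
  "covl cs rs \<longleftrightarrow> list_all2 covers cs rs"

lemma opt_alt: "opt c rs = Inf (sched_cost c ` {cs. covl cs rs})"
proof -
  have "{sched_cost c cs |cs. length cs = length rs \<and> (\<forall>j<length rs. covers (cs ! j) (rs ! j))}
      = sched_cost c ` {cs. covl cs rs}"
    unfolding covl_def list_all2_conv_all_nth by (simp add: setcompr_eq_image cong: conj_cong)
  then show ?thesis by (simp add: opt_def)
qed

lemma opt_le:
  assumes "covl cs rs"
  shows "opt c rs \<le> sched_cost c cs"
  unfolding opt_alt
proof (rule cInf_lower)
  show "sched_cost c cs \<in> sched_cost c ` {cs. covl cs rs}" using assms by simp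
  show "bdd_below (sched_cost c ` {cs. covl cs rs})"
    by (rule bdd_belowI[of _ 0]) (use sched_nonneg in blast)
qed

lemma opt_ge:
  assumes "\<And>cs. covl cs rs \<Longrightarrow> L \<le> sched_cost c cs"
  shows "L \<le> opt c rs"
  unfolding opt_alt
proof (rule cInf_greatest)
  have "covl (map (\<lambda>r. (r,r)) rs) rs" by (induction rs) (auto simp: covl_def covers_def)
  then show "sched_cost c ` {cs. covl cs rs} \<noteq> {}" by blast
  show "\<And>x. x \<in> sched_cost c ` {cs. covl cs rs} \<Longrightarrow> L \<le> x"
    using assms by blast
qed

lemma opt_nonneg: "0 \<le> opt c rs"
  by (rule opt_ge) (simp add: sched_nonneg)

lemma archi:
  fixes K B C :: real
  assumes "\<And>n::nat. real n * K \<le> real n * B + C"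
  shows "K \<le> B"
proof (rule ccontr)
  assume "\<not> K \<le> B"
  then have p: "0 < K - B" by simp
  obtain n :: nat where n: "C / (K - B) < real n" using reals_Archimedean2 by blast
  then have "C < real n * (K - B)" using p by (simp add: pos_divide_less_eq)
  then have "C < real n * K - real n * B" by (simp add: right_diff_distrib)
  with assms[of n] show False by linarith
qed

lemma W1p: fixes ea eb z :: real
  assumes "ea = 1 \<or> eb = 1" "2 \<le> z"
  shows "1 \<le> cdist (0,z) (ea,eb)"
  using assms unfolding cdist_def min_def fst_conv snd_conv abs_real_def by smt

lemma W3p: fixes ea eb da db fa fb z :: real
  assumes "ea = 1 \<or> eb = 1" "da = 0 \<or> db = 0" "fa = z \<or> fb = z" "2 \<le> z"
  shows "1 \<le> cdist (ea,eb) (da,db) + cdist (da,db) (fa,fb)"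
  using assms unfolding cdist_def min_def fst_conv snd_conv abs_real_def by smt

lemma W4p: fixes ea eb da db fa fb ha hb z :: real
  assumes "ea = 1 \<or> eb = 1" "da = 0 \<or> db = 0" "fa = z \<or> fb = z" "ha = 1 \<or> hb = 1" "2 \<le> z"
  shows "2 \<le> cdist (ea,eb) (da,db) + cdist (da,db) (fa,fb) + cdist (fa,fb) (ha,hb)"
  using assms unfolding cdist_def min_def fst_conv snd_conv abs_real_def by smt

lemma W1: assumes "covers e 1" "(2::real) \<le> z" shows "1 \<le> cdist (0,z) e"
  using W1p[of "fst e" "snd e" z] assms by (simp add: covers_def)

lemma W3: assumes "covers e 1" "covers d 0" "covers f z" "(2::real) \<le> z"
  shows "1 \<le> cdist e d + cdist d f"
proof -
  obtain ea eb where E: "e = (ea,eb)" by (cases e)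
  obtain da db where D: "d = (da,db)" by (cases d)
  obtain fa fb where F: "f = (fa,fb)" by (cases f)
  show ?thesis using W3p[where ea=ea and eb=eb and da=da and db=db and fa=fa and fb=fb and z=z] assms unfolding E D F covers_def fst_conv snd_conv by blast
qed

lemma W4: assumes "covers e 1" "covers d 0" "covers f z" "covers h 1" "(2::real) \<le> z"
  shows "2 \<le> cdist e d + cdist d f + cdist f h"
proof -
  obtain ea eb where E: "e = (ea,eb)" by (cases e)
  obtain da db where D: "d = (da,db)" by (cases d)
  obtain fa fb where F: "f = (fa,fb)" by (cases f)
  obtain ha hb where H: "h = (ha,hb)" by (cases h)
  show ?thesis using W4p[where ea=ea and eb=eb and da=da and db=db and fa=fa and fb=fb and ha=ha and hb=hb and z=z] assms unfolding E D F H covers_def fst_conv snd_conv by blast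
qed

lemma CLa: fixes u2 z :: real
  assumes "u2 \<le> 0" "0 \<le> z"
  shows "z \<le> cdist (u2,0) (0,z)"
  using assms unfolding cdist_def by (auto simp: min_def abs_if split: if_split_asm)

lemma CLb: fixes u1 v1 v2 z :: real
  assumes "u1 \<le> v1" "u1 = 1" "0 \<le> v2" "2 \<le> z"
  shows "min (2 + (z - v2)) (z - 1) \<le> cdist (0,z) (u1,v1) + cdist (u1,v1) (0,v2)"
  using assms unfolding cdist_def by (auto simp: min_def abs_if split: if_split_asm)

lemma CLc: fixes u1 v1 v2 z :: real
  assumes "u1 \<le> v1" "v1 = 1" "0 \<le> v2" "2 \<le> z"
  shows "z - 1 \<le> cdist (0,z) (u1,v1) + cdist (u1,v1) (0,v2)"
  using assms unfolding cdist_def by (auto simp: min_def abs_if split: if_split_asm)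

lemma CLe: fixes b z :: real
  assumes "0 \<le> b"
  shows "\<bar>b - z\<bar> \<le> cdist (0,z) (0,b)"
  using assms unfolding cdist_def by (auto simp: min_def abs_if split: if_split_asm)

lemma CL: fixes z lam :: real
  assumes "3 + 2*lam < z" "0 < lam" "lam \<le> 1"
  "sorted_conf t1" "covers t1 1" "sorted_conf t2" "covers t2 0"
  "cdist (0,z) t1 + cdist t1 t2 + cdist t2 (0,z) \<le> 2 + 2*lam"
shows "fst t2 = 0 \<and> 2 + (z - snd t2) \<le> cdist (0,z) t1 + cdist t1 t2 \<and> z - snd t2 \<le> lam"
proof -
  obtain u1 v1 where T1: "t1 = (u1,v1)" by (cases t1)
  obtain u2 v2 where T2: "t2 = (u2,v2)" by (cases t2)
  have s1: "u1 \<le> v1" and c1: "u1 = 1 \<or> v1 = 1" using assms T1 by (auto simp: sorted_conf_def covers_def)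
  have s2: "u2 \<le> v2" and c2: "u2 = 0 \<or> v2 = 0" using assms T2 by (auto simp: sorted_conf_def covers_def)
  have n1: "0 \<le> cdist (0,z) t1" "0 \<le> cdist t1 t2" by (simp_all add: cdist_def)
  have u20: "u2 = 0"
  proof (rule ccontr)
    assume "u2 \<noteq> 0"
    then have "v2 = 0" "u2 \<le> 0" using c2 s2 by auto
    then have "z \<le> cdist t2 (0,z)" using CLa[of u2 z] assms(1,2) T2 by simp
    then show False using assms(1,2,3,8) n1 by linarith
  qed
  then have v2: "0 \<le> v2" using s2 by simp
  have db: "cdist t2 (0,z) = \<bar>z - v2\<bar>"
    using CLe[of z v2] v2 assms(1,2) u20 T2 unfolding cdist_def by (auto simp: min_def abs_if)
  have P: "2 + (z - v2) \<le> cdist (0,z) t1 + cdist t1 t2"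
  proof (cases "u1 = 1")
    case True
    have "min (2 + (z - v2)) (z - 1) \<le> cdist (0,z) t1 + cdist t1 t2"
      using CLb[of u1 v1 v2 z] True s1 v2 assms(1,2) T1 T2 u20 by simp
    then show ?thesis using assms(1,2,3,8) db by (auto simp: min_def split: if_splits)
  next
    case False
    then have "v1 = 1" using c1 by simp
    then have "z - 1 \<le> cdist (0,z) t1 + cdist t1 t2"
      using CLc[of u1 v1 v2 z] s1 v2 assms(1,2) T1 T2 u20 by simp
    then show ?thesis using assms(1,2,3,8) db by (auto simp: min_def split: if_splits)
  qed
  have "z - v2 \<le> lam" using P db assms(8) by (auto simp: abs_if split: if_splits)
  then show ?thesis using P u20 T2 by simp
qed

lemma covl_append: "covl xs ys \<Longrightarrow> covl xs' ys' \<Longrightarrow> covl (xs @ xs') (ys @ ys')"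
  unfolding covl_def by (rule list_all2_appendI)

lemma covl_rep: "covl cs rs \<Longrightarrow> covl (concat (replicate n cs)) (concat (replicate n rs))"
  by (induction n) (auto simp: covl_def intro: list_all2_appendI)

lemma cdist_le: "cdist c d \<le> \<bar>fst c - fst d\<bar> + \<bar>snd c - snd d\<bar>"
  by (simp add: cdist_def)

section \<open>Consistency cycle\<close>

definition fpred :: "real \<Rightarrow> nat" where "fpred r = (if r = 0 then 1 else 2)"

lemma ftp_force:
  assumes "0 < z" "set rs \<subseteq> {0, z}"
  shows "ftp_final (0,z) (map (\<lambda>r. (r, fpred r)) rs) = (0,z) \<and> ftp_cost (0,z) (map (\<lambda>r. (r, fpred r)) rs) = 0"
  using assms(2)
proof (induction rs)
  case Nil then show ?case by simp
next
  case (Cons r rs)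
  then have r: "r = 0 \<or> r = z" and IH: "ftp_final (0,z) (map (\<lambda>r. (r, fpred r)) rs) = (0,z) \<and> ftp_cost (0,z) (map (\<lambda>r. (r, fpred r)) rs) = 0" by auto
  have "ftp_step (0,z) r (fpred r) = (0,z) \<and> ftp_step_cost (0,z) r (fpred r) = 0"
    using r assms(1) by (auto simp: ftp_step_def ftp_step_cost_def fpred_def)
  then show ?case using IH by simp
qed

lemma opt_tail:
  fixes z :: real
  assumes z: "2 \<le> z" and rs: "set rs \<subseteq> {0, z}"
  shows "covers e 1 \<Longrightarrow> covl cs ((0 # z # rs) @ concat (replicate k (1 # 0 # z # rs))) \<Longrightarrow> 2 * real k + 1 \<le> sched_cost e cs"
proof (induction k arbitrary: e cs)
  case 0
  then obtain da dz rest where cs: "cs = da # dz # rest" and ca: "covers da 0" and cz: "covers dz z"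
    by (cases cs; cases "tl cs") (auto simp: covl_def)
  have "1 \<le> cdist e da + cdist da dz" using W3[OF 0(1) ca cz z] .
  then show ?case using sched_nonneg[of dz rest] by (simp add: cs)
next
  case (Suc k)
  obtain da dz rest where cs: "cs = da # dz # rest" and ca: "covers da 0" and cz: "covers dz z"
    and crest: "covl rest (rs @ (1 # (0 # z # rs) @ concat (replicate k (1 # 0 # z # rs))))"
    using Suc.prems(2) by (cases cs; cases "tl cs") (auto simp: covl_def)
  obtain rF rest2 where rest: "rest = rF @ rest2" and cF: "covl rF rs"
    and c2: "covl rest2 (1 # (0 # z # rs) @ concat (replicate k (1 # 0 # z # rs)))"
    using crest unfolding covl_def list_all2_append2 by blast
  obtain dx rest3 where r2: "rest2 = dx # rest3" and cx: "covers dx 1"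
    and c3: "covl rest3 ((0 # z # rs) @ concat (replicate k (1 # 0 # z # rs)))"
    using c2 by (cases rest2) (auto simp: covl_def)
  have IH: "2 * real k + 1 \<le> sched_cost dx rest3" using Suc.IH[OF cx c3] .
  have "sched_cost dz rest = sched_cost dz rF + sched_cost (last (dz # rF)) (dx # rest3)"
    by (simp add: rest r2 sched_append)
  also have "\<dots> = sched_cost dz rF + cdist (last (dz # rF)) dx + sched_cost dx rest3" by simp
  finally have "cdist dz dx + sched_cost dx rest3 \<le> sched_cost dz rest"
    using sched_ge[of dz rF] cdist_tri[of dz dx "last (dz # rF)"] by linarith
  moreover have "2 \<le> cdist e da + cdist da dz + cdist dz dx" using W4[OF Suc.prems(1) ca cz cx z] .
  ultimately show ?case using IH by (simp add: cs algebra_simps)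
qed

lemma opt_cons_lb:
  fixes z :: real
  assumes z: "2 \<le> z" and rs: "set rs \<subseteq> {0, z}"
  shows "2 * real n \<le> opt (0,z) (concat (replicate n (1 # 0 # z # rs)))"
proof (rule opt_ge)
  fix cs assume c: "covl cs (concat (replicate n (1 # 0 # z # rs)))"
  show "2 * real n \<le> sched_cost (0, z) cs"
  proof (cases n)
    case 0 then show ?thesis using sched_nonneg by simp
  next
    case (Suc k)
    then obtain d1 cs' where cs: "cs = d1 # cs'" and c1: "covers d1 1"
      and c': "covl cs' ((0 # z # rs) @ concat (replicate k (1 # 0 # z # rs)))"
      using c by (cases cs) (auto simp: covl_def)
    have "2 * real k + 1 \<le> sched_cost d1 cs'" using opt_tail[OF z rs c1 c'] .
    moreover have "1 \<le> cdist (0,z) d1" using W1[OF c1 z] .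
    ultimately show ?thesis by (simp add: cs Suc algebra_simps)
  qed
qed

lemma cons_cycle:
  fixes z lam :: real
  assumes mc: "memory_constrained A" and cons: "consistent A (1 + lam)"
    and z: "3 + 2*lam < z" and lam: "0 < lam" "lam \<le> 1"
  shows "cdist (0,z) (A (0,z) 1 1) + cdist (A (0,z) 1 1) (A (A (0,z) 1 1) 0 1)
           + cdist (A (A (0,z) 1 1) 0 1) (0,z) \<le> 2 + 2*lam"
proof -
  define t1 where "t1 = A (0,z) 1 1"
  define t2 where "t2 = A t1 0 1"
  define t3 where "t3 = A t2 z 2"
  have z0: "0 < z" "2 \<le> z" using z lam by auto
  have s0: "sorted_conf (0,z)" using z0 by (simp add: sorted_conf_def)
  have s1: "sorted_conf t1" using mc_step[OF mc s0] by (simp add: t1_def)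
  have s2: "sorted_conf t2" using mc_step[OF mc s1] by (simp add: t2_def)
  have s3: "sorted_conf t3" using mc_step[OF mc s2] by (simp add: t3_def)
  obtain rs where rs: "set rs \<subseteq> {0, z}"
    and fin: "\<And>f. (\<And>r. f r \<in> {1,2}) \<Longrightarrow> alg_final A t3 (map (\<lambda>r. (r, f r)) rs) = (0,z)"
    using mc_force[OF mc s3 z0(1)] by blast
  define F where "F = map (\<lambda>r. (r, fpred r)) rs"
  have finF: "alg_final A t3 F = (0,z)" unfolding F_def by (rule fin) (simp add: fpred_def)
  define cyc where "cyc = [(1,1),(0,1),(z,2)] @ F"
  have e3: "alg_final A (0,z) [(1,1),(0,1),(z,2)] = t3" by (simp add: t1_def t2_def t3_def)
  have c3: "alg_cost A (0,z) [(1,1),(0,1),(z,2)] = cdist (0,z) t1 + cdist t1 t2 + cdist t2 t3"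
    by (simp add: t1_def t2_def t3_def)
  have afin: "alg_final A (0,z) cyc = (0,z)"
    unfolding cyc_def alg_final_append e3 finF ..
  define S where "S = cdist (0,z) t1 + cdist t1 t2 + cdist t2 (0,z)"
  have K: "S \<le> alg_cost A (0,z) cyc"
  proof -
    have "alg_cost A (0,z) cyc = cdist (0,z) t1 + cdist t1 t2 + cdist t2 t3 + alg_cost A t3 F"
      unfolding cyc_def alg_cost_append e3 c3 ..
    moreover have "cdist t3 (0,z) \<le> alg_cost A t3 F" using alg_cost_ge[of t3 A F] finF by simp
    moreover have "cdist t2 (0,z) \<le> cdist t2 t3 + cdist t3 (0,z)" by (rule cdist_tri)
    ultimately show ?thesis unfolding S_def by linarith
  qed
  have fF: "ftp_final (0,z) F = (0,z) \<and> ftp_cost (0,z) F = 0" using ftp_force[OF z0(1) rs] by (simp add: F_def)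
  have ftp3: "ftp_final (0,z) [(1,1),(0,1),(z,2)] = (0,z) \<and> ftp_cost (0,z) [(1,1),(0,1),(z,2)] = 2"
    using z0 by (simp add: ftp_step_def ftp_step_cost_def)
  have fcyc: "ftp_final (0,z) cyc = (0,z) \<and> ftp_cost (0,z) cyc = 2"
    using fF ftp3 by (simp add: cyc_def ftp_cost_append ftp_final_append)
  have mcyc: "map fst cyc = 1 # 0 # z # rs" by (simp add: cyc_def F_def comp_def)
  define sc where "sc = [(1::real,z),(0,z),(0,z)] @ map (\<lambda>_. (0::real,z)) rs"
  have cmap: "list_all2 covers (map (\<lambda>_. (0::real,z)) rs) rs"
    using rs by (induction rs) (auto simp: covers_def)
  have csc: "covl sc (map fst cyc)" unfolding mcyc sc_def covl_def
    using cmap by (simp add: covers_def)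
  have ssc0: "sched_cost (0,z) (map (\<lambda>_. (0::real,z)) rs) = 0" by (induction rs) (auto simp: cdist_self)
  have ssc: "sched_cost (0,z) sc = 2"
    using z0 ssc0 by (simp add: sc_def sched_append cdist_def)
  obtain C where C: "\<forall>c I. sorted_conf c \<and> valid_preds I \<and> eta c I = 0
      \<longrightarrow> alg_cost A c I \<le> (1 + lam) * opt c (map fst I) + C c"
    using cons unfolding consistent_def by blast
  have "\<And>n::nat. real n * alg_cost A (0,z) cyc \<le> real n * (2 + 2*lam) + C (0,z)"
  proof -
    fix n :: nat
    define I where "I = concat (replicate n cyc)"
    have mI: "map fst I = concat (replicate n (1 # 0 # z # rs))"
      by (simp add: I_def map_concat mcyc)
    have lsc: "sc \<noteq> [] \<and> last sc = (0,z)" by (simp add: sc_def last_map)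
    have o1: "opt (0,z) (map fst I) \<le> real n * 2"
    proof -
      have "covl (concat (replicate n sc)) (map fst I)"
        using covl_rep[OF csc, of n] by (simp add: I_def map_concat)
      then have "opt (0,z) (map fst I) \<le> sched_cost (0,z) (concat (replicate n sc))" by (rule opt_le)
      also have "\<dots> = real n * 2" using sched_rep[of sc "(0,z)" n] lsc ssc by simp
      finally show ?thesis .
    qed
    have o2: "2 * real n \<le> opt (0,z) (map fst I)" using opt_cons_lb[OF z0(2) rs] mI by simp
    have fI: "ftp_cost (0,z) I = real n * 2" using ftp_rep[of "(0,z)" cyc n] fcyc by (simp add: I_def)
    have eta: "eta (0,z) I = 0" unfolding eta_def using o1 o2 fI by simp
    have vp: "valid_preds I" unfolding valid_preds_def I_def cyc_def F_def
      by (auto simp: fpred_def)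
    have "alg_cost A (0,z) I \<le> (1 + lam) * opt (0,z) (map fst I) + C (0,z)"
      using C s0 vp eta by blast
    moreover have "alg_cost A (0,z) I = real n * alg_cost A (0,z) cyc"
      using alg_rep[OF afin, of n] by (simp add: I_def)
    ultimately show "real n * alg_cost A (0,z) cyc \<le> real n * (2 + 2*lam) + C (0,z)"
      using o1 o2 by (simp add: algebra_simps)
  qed
  then have "alg_cost A (0,z) cyc \<le> 2 + 2*lam" by (rule archi)
  then show ?thesis using K unfolding S_def t1_def t2_def by simp
qed

section \<open>Robustness phase\<close>

fun tr :: "alg \<Rightarrow> real \<Rightarrow> nat \<Rightarrow> conf" where
  "tr A b 0 = (0,b)"
| "tr A b (Suc j) = A (A (tr A b j) 1 1) 0 1"

fun alt :: "nat \<Rightarrow> (real \<times> nat) list" where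
  "alt 0 = []"
| "alt (Suc n) = alt n @ [(1,1),(0,1)]"

fun salt :: "nat \<Rightarrow> conf list" where
  "salt 0 = []"
| "salt (Suc n) = salt n @ [(0,1),(0,1)]"

lemma alt_final: "alg_final A (0,b) (alt j) = tr A b j"
  by (induction j) (simp_all add: alg_final_append)

lemma alt_cost_Suc: "alg_cost A (0,b) (alt (Suc j)) = alg_cost A (0,b) (alt j)
   + cdist (tr A b j) (A (tr A b j) 1 1) + cdist (A (tr A b j) 1 1) (A (A (tr A b j) 1 1) 0 1)"
  by (simp add: alg_cost_append alt_final)

lemma alt_prefix: "J \<le> N \<Longrightarrow> \<exists>ys. alt N = alt J @ ys"
proof (induction N)
  case 0 then show ?case by simp
next
  case (Suc N)
  show ?case
  proof (cases "J \<le> N")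
    case True
    then obtain ys where "alt N = alt J @ ys" using Suc.IH by blast
    then show ?thesis by simp
  next
    case False
    then have "J = Suc N" using Suc.prems by simp
    then show ?thesis by simp
  qed
qed

lemma alt_preds: "\<forall>x\<in>set (alt n). snd x = 1"
  by (induction n) auto

lemma alt_map: "map fst (alt n) = concat (replicate n [1,0])"
  by (induction n) (auto simp: replicate_append_same[symmetric])

lemma salt_covl: "covl (salt n) (map fst (alt n))"
  by (induction n) (auto simp: covl_def covers_def intro!: list_all2_appendI)

lemma salt_cost: "sched_cost c (salt n) \<le> cdist c (0,1) \<and> (0 < n \<longrightarrow> last (c # salt n) = (0,1))"
proof (induction n)
  case 0 then show ?case by (simp add: cdist_nonneg)
next
  case (Suc n)
  have eq: "sched_cost c (salt (Suc n)) = sched_cost c (salt n) + cdist (last (c # salt n)) (0,1)"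
    by (simp add: sched_append cdist_self)
  show ?case
  proof (cases n)
    case 0 then show ?thesis using eq by simp
  next
    case (Suc m)
    then have "last (c # salt n) = (0,1)" using Suc.IH by simp
    then show ?thesis using eq Suc.IH by (simp add: cdist_self)
  qed
qed

lemma tr_sorted:
  assumes mc: "memory_constrained A" and b: "0 \<le> b"
  shows "sorted_conf (tr A b j)"
proof (induction j)
  case 0 then show ?case using b by (simp add: sorted_conf_def)
next
  case (Suc j)
  have "sorted_conf (A (tr A b j) 1 1)" using mc_step[OF mc Suc.IH] by blast
  then show ?case using mc_step[OF mc] by simp
qed

lemma INV:
  fixes lam b :: real
  assumes mc: "memory_constrained A" and cons: "consistent A (1 + lam)"
    and lam: "0 < lam" "lam \<le> 1" and b: "0 \<le> b"
  shows "(\<forall>i<j. 3 + 2*lam < snd (tr A b i)) \<Longrightarrow> fst (tr A b j) = 0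
     \<and> 2 * real j + (b - snd (tr A b j)) \<le> alg_cost A (0,b) (alt j)
     \<and> b - snd (tr A b j) \<le> lam * real j"
proof (induction j)
  case 0 then show ?case by simp
next
  case (Suc j)
  then have IH: "fst (tr A b j) = 0 \<and> 2 * real j + (b - snd (tr A b j)) \<le> alg_cost A (0,b) (alt j)
     \<and> b - snd (tr A b j) \<le> lam * real j" by simp
  define z where "z = snd (tr A b j)"
  have zT: "3 + 2*lam < z" using Suc.prems z_def by simp
  have trj: "tr A b j = (0,z)" using IH z_def by (metis prod.collapse)
  define t1 where "t1 = A (0,z) 1 1"
  define t2 where "t2 = A t1 0 1"
  have s0: "sorted_conf (0,z)" using zT lam by (simp add: sorted_conf_def)
  have st1: "sorted_conf t1 \<and> covers t1 1" using mc_step[OF mc s0] by (simp add: t1_def)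
  have st2: "sorted_conf t2 \<and> covers t2 0" using mc_step[OF mc conjunct1[OF st1]] by (simp add: t2_def)
  have S: "cdist (0,z) t1 + cdist t1 t2 + cdist t2 (0,z) \<le> 2 + 2*lam"
    using cons_cycle[OF mc cons zT lam] by (simp add: t1_def t2_def)
  have cl: "fst t2 = 0 \<and> 2 + (z - snd t2) \<le> cdist (0,z) t1 + cdist t1 t2 \<and> z - snd t2 \<le> lam"
    using CL[OF zT lam conjunct1[OF st1] conjunct2[OF st1] conjunct1[OF st2] conjunct2[OF st2] S] .
  have trS: "tr A b (Suc j) = t2" by (simp add: trj t1_def t2_def)
  have cS: "alg_cost A (0,b) (alt (Suc j)) = alg_cost A (0,b) (alt j) + cdist (0,z) t1 + cdist t1 t2"
    using alt_cost_Suc[of A b j] by (simp add: trj t1_def t2_def)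
  show ?case using IH cl cS trS z_def by (simp add: algebra_simps)
qed

theorem theorem7:
  fixes A :: alg and lam \<beta>' :: real
  assumes "memory_constrained A"
    and "0 < lam" and "lam \<le> 1"
    and "consistent A (1 + lam)"
    and "\<beta>' < 1 + 1 / lam"
  shows "\<not> robust A \<beta>'"
proof
  assume rob: "robust A \<beta>'"
  note mc = assms(1) and lam = assms(2,3) and cons = assms(4)
  define \<beta> where "\<beta> = max \<beta>' 0"
  define L where "L = 1 + 1 / lam"
  define T where "T = 3 + 2 * lam"
  have il: "0 < 1 / lam" using lam by simp
  have Lpos: "0 < L - \<beta>" using assms(5) il unfolding \<beta>_def L_def by linarith
  have \<beta>0: "0 \<le> \<beta>" and \<beta>\<beta>: "\<beta>' \<le> \<beta>" by (simp_all add: \<beta>_def)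
  have T0: "0 < T" using lam by (simp add: T_def)
  define b where "b = T * L / (L - \<beta>) + 1"
  have "T \<le> T * L / (L - \<beta>)"
    using Lpos T0 \<beta>0 by (simp add: pos_le_divide_eq mult_left_mono)
  then have bT: "T + 1 \<le> b" by (simp add: b_def)
  have b0: "0 < b" using bT T0 by simp
  have key: "b * \<beta> < (b - T) * L"
  proof -
    have "T * L = (b - 1) * (L - \<beta>)" using Lpos by (simp add: b_def)
    then show ?thesis using Lpos by (simp add: algebra_simps)
  qed
  define N where "N = nat \<lceil>(b - T) * L\<rceil> + 1"
  have NL: "(b - T) * L \<le> real N" unfolding N_def by linarith
  have N1: "1 \<le> N" by (simp add: N_def)
  define s where "s = A (tr A b N) b 2"
  have ss: "sorted_conf s" using mc_step[OF mc tr_sorted[OF mc, of b N]] b0 by (simp add: s_def)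
  obtain rs where rs: "set rs \<subseteq> {0, b}"
    and fin: "\<And>f. (\<And>r. f r \<in> {1,2}) \<Longrightarrow> alg_final A s (map (\<lambda>r. (r, f r)) rs) = (0,b)"
    using mc_force[OF mc ss b0] by blast
  define F where "F = map (\<lambda>r. (r, 1::nat)) rs"
  have finF: "alg_final A s F = (0,b)" unfolding F_def by (rule fin) simp
  define cyc where "cyc = alt N @ [(b,2)] @ F"
  have afin: "alg_final A (0,b) cyc = (0,b)"
    by (simp add: cyc_def alg_final_append alt_final s_def[symmetric] finF)
  define Kr where "Kr = alg_cost A (0,b) cyc"
  have KLB: "alg_cost A (0,b) (alt J) + cdist (tr A b J) (0,b) \<le> Kr" if JN0: "J \<le> N" for J
  proof -
    obtain ys where ys: "alt N = alt J @ ys" using alt_prefix[OF JN0] by blast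
    define rest where "rest = ys @ [(b,2)] @ F"
    have c: "cyc = alt J @ rest" by (simp add: cyc_def ys rest_def)
    have "alg_final A (tr A b J) rest = (0,b)" using afin by (simp add: c alg_final_append alt_final)
    then have "cdist (tr A b J) (0,b) \<le> alg_cost A (tr A b J) rest" using alg_cost_ge[of "tr A b J" A rest] by simp
    then show ?thesis by (simp add: Kr_def c alg_cost_append alt_final)
  qed
  have bge: "0 \<le> b" using b0 by simp
  have Klow: "2 * ((b - T) * L) \<le> Kr"
  proof (cases "\<forall>i<N. T < snd (tr A b i)")
    case True
    have I: "fst (tr A b N) = 0 \<and> 2 * real N + (b - snd (tr A b N)) \<le> alg_cost A (0,b) (alt N)"
      using INV[OF mc cons lam bge, of N] True by (simp add: T_def)
    then have "tr A b N = (0, snd (tr A b N))" by (metis prod.collapse)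
    then have "\<bar>b - snd (tr A b N)\<bar> \<le> cdist (tr A b N) (0,b)" using CLe[OF bge, of "snd (tr A b N)"] by simp
    then have "2 * real N \<le> Kr" using KLB[of N] I by linarith
    then show ?thesis using NL by linarith
  next
    case False
    then have ex: "\<exists>i. snd (tr A b i) \<le> T" by (auto simp: not_less)
    define J where "J = (LEAST i. snd (tr A b i) \<le> T)"
    have JT: "snd (tr A b J) \<le> T" unfolding J_def using LeastI_ex[OF ex] .
    have Jlt: "\<forall>i<J. T < snd (tr A b i)" unfolding J_def using not_less_Least by (metis not_le)
    have JN: "J \<le> N"
    proof -
      obtain i where "i < N" "snd (tr A b i) \<le> T" using False by (auto simp: not_less)
      then have "J \<le> i" unfolding J_def by (simp add: Least_le)
      then show ?thesis using \<open>i < N\<close> by simp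
    qed
    have I: "fst (tr A b J) = 0 \<and> 2 * real J + (b - snd (tr A b J)) \<le> alg_cost A (0,b) (alt J)
       \<and> b - snd (tr A b J) \<le> lam * real J"
      using INV[OF mc cons lam bge, of J] Jlt by (simp add: T_def)
    then have "tr A b J = (0, snd (tr A b J))" by (metis prod.collapse)
    then have "\<bar>b - snd (tr A b J)\<bar> \<le> cdist (tr A b J) (0,b)" using CLe[OF bge, of "snd (tr A b J)"] by simp
    then have "b - snd (tr A b J) \<le> cdist (tr A b J) (0,b)" by (rule order_trans[rotated]) simp
    moreover have "2 * real J + (b - snd (tr A b J)) \<le> alg_cost A (0,b) (alt J)" using I by simp
    ultimately have K1: "2 * real J + 2 * (b - T) \<le> Kr" using KLB[OF JN] JT by smt
    have "b - T \<le> lam * real J" using I JT by linarith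
    then have "(b - T) / lam \<le> real J" using lam by (simp add: pos_divide_le_eq mult.commute)
    then have "2 * ((b - T) / lam) + 2 * (b - T) \<le> Kr" using K1 by linarith
    moreover have "2 * ((b - T) * L) = 2 * ((b - T) / lam) + 2 * (b - T)"
      unfolding L_def by (simp add: algebra_simps)
    ultimately show ?thesis by linarith
  qed
  define sc where "sc = salt N @ [(0,b)] @ map (\<lambda>_. (0,b)) rs"
  have mcyc: "map fst cyc = map fst (alt N) @ [b] @ rs" by (simp add: cyc_def F_def comp_def)
  have cmap: "list_all2 covers (map (\<lambda>_. (0::real,b)) rs) rs"
    using rs by (induction rs) (auto simp: covers_def)
  have csc: "covl sc (map fst cyc)" unfolding mcyc sc_def
    by (rule covl_append[OF salt_covl]) (use cmap in \<open>simp add: covl_def covers_def\<close>)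
  have lsc: "sc \<noteq> [] \<and> last sc = (0,b)" by (simp add: sc_def last_map)
  have ssc: "sched_cost (0,b) sc \<le> 2 * b"
  proof -
    have sa: "sched_cost (0,b) (salt N) \<le> cdist (0,b) (0,1)" and la: "last ((0,b) # salt N) = (0,1)"
      using salt_cost[of "(0,b)" N] N1 by auto
    have m0: "sched_cost (0,b) (map (\<lambda>_. (0::real,b)) rs) = 0" by (induction rs) (auto simp: cdist_self)
    have ne: "salt N \<noteq> []" using N1 by (cases N) auto
    have la': "last (salt N) = (0,1)" using la ne by simp
    have "sched_cost (0,b) sc = sched_cost (0,b) (salt N) + cdist (0,1) (0,b)"
      by (simp add: sc_def sched_append la' ne m0)
    moreover have "cdist (0,b) (0,1) \<le> b" "cdist (0,1) (0,b) \<le> b"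
      using cdist_le[of "(0,b)" "(0,1)"] cdist_le[of "(0,1)" "(0,b)"] bT T0 by auto
    ultimately show ?thesis using sa by linarith
  qed
  obtain C where C: "\<forall>c I. sorted_conf c \<and> valid_preds I
      \<longrightarrow> alg_cost A c I \<le> \<beta>' * opt c (map fst I) + C c"
    using rob unfolding robust_def by blast
  have "\<And>n::nat. real n * Kr \<le> real n * (2 * b * \<beta>) + C (0,b)"
  proof -
    fix n :: nat
    define I where "I = concat (replicate n cyc)"
    have o1: "opt (0,b) (map fst I) \<le> real n * (2 * b)"
    proof -
      have "covl (concat (replicate n sc)) (map fst I)"
        using covl_rep[OF csc, of n] by (simp add: I_def map_concat)
      then have "opt (0,b) (map fst I) \<le> sched_cost (0,b) (concat (replicate n sc))" by (rule opt_le)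
      also have "\<dots> = real n * sched_cost (0,b) sc" using sched_rep[of sc "(0,b)" n] lsc by simp
      also have "\<dots> \<le> real n * (2 * b)" using ssc by (simp add: mult_left_mono)
      finally show ?thesis .
    qed
    have o0: "0 \<le> opt (0,b) (map fst I)" by (rule opt_nonneg)
    have vp: "valid_preds I" unfolding valid_preds_def I_def cyc_def F_def
      using alt_preds[of N] by auto
    have s0: "sorted_conf (0,b)" using b0 by (simp add: sorted_conf_def)
    have "alg_cost A (0,b) I \<le> \<beta>' * opt (0,b) (map fst I) + C (0,b)"
      using C s0 vp by blast
    also have "\<beta>' * opt (0,b) (map fst I) \<le> \<beta> * opt (0,b) (map fst I)"
      using \<beta>\<beta> o0 by (simp add: mult_right_mono)
    also have "\<beta> * opt (0,b) (map fst I) \<le> \<beta> * (real n * (2 * b))"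
      using \<beta>0 o1 by (simp add: mult_left_mono)
    finally have "alg_cost A (0,b) I \<le> \<beta> * (real n * (2 * b)) + C (0,b)" by simp
    moreover have "alg_cost A (0,b) I = real n * Kr"
      using alg_rep[OF afin, of n] by (simp add: I_def Kr_def)
    ultimately show "real n * Kr \<le> real n * (2 * b * \<beta>) + C (0,b)"
      by (simp add: algebra_simps)
  qed
  then have "Kr \<le> 2 * b * \<beta>" by (rule archi)
  then show False using Klow key by linarith
qed

end
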